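(* Consider an $N$-player discounted stochastic game with finite stage space $\mathcal{S}$, finite action sets $\mathcal{X}_i(s)$ for player $i$ at stage $s$, transition probabilities $\mathbb{P}(s'\mid s,\mathbf{x})$, discount factor $\gamma\in(0,1)$, and polymatrix stage payoffs $M_i(\mathbf{x},s)=\sum_{j\in[N],j\ne i}x_i(s)^TA^{ij}(s)x_j(s)$, where each $A^{ij}(s)$ is only known to lie in an uncertainty set $\mathcal{U}^{ij}(s)$. Form the associated agent game, and suppose the agent game has an ex-post equilibrium $(a^*(i,s))_{i\in[N],s\in\mathcal{S}}$. Define $x_i^*(s)=a^*(i,s)$ for each player $i$ and stage $s$. Then $(x_i^*(s))_{i\in[N],s\in\mathcal{S}}$ is an ex-post Markov perfect equilibrium (ex-post MPE) of the stochastic game.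
   Context: In the stochastic game, play starts at an initial stage $s^0$; at each time $t$ all players simultaneously choose (possibly mixed) actions, where player $i$'s action $x_i(s^t,\mathcal{H}^t)\in\mathcal{X}_i(s^t)$ may depend on the history $\mathcal{H}^t$ of past stages and actions; stage payoffs are realized and the next stage is drawn from $\mathbb{P}(\cdot\mid s^t,\mathbf{x})$. (Mixed actions at stage $s$ are identified with probability vectors over $\mathcal{X}_i(s)$, and $x_i(s)^TA^{ij}(s)x_j(s)$ is the expected stage payoff.) Player $i$'s expected discounted payoff from initial stage $s^0$ is $\Pi_i(x_1,\dots,x_N;s^0)=\mathbb{E}\big[\sum_{t=0}^\infty\gamma^tM_i(x_1(s^t,\mathcal{H}^t),\dots,x_N(s^t,\mathcal{H}^t);s^t)\big]$. A Markov strategy depends only on the current stage, written $x_i(s)$. A profile of Markov strategies $(x_1^*(s),\dots,x_N^*(s))$ is an ex-post MPE if for every choice of payoff matrices $A^{ij}(s)\in\mathcal{U}^{ij}(s)$ (all $i,j\in[N]$, $s\in\mathcal{S}$), every player $i$ and every initial stage $s$, the strategy $x_i^*$ maximizes $\Pi_i(x_i,x_{-i}^*;s)$ over player $i$'s strategies, given the others play $x_{-i}^*$. The agent game is the one-shot game with one player ("agent") $(i,s)$ for each $i\in[N]$, $s\in\mathcal{S}$, whose action set is $\mathcal{X}_i(s)$; for an action profile $\mathbf{a}=(a(i,s))_{i,s}$ the payoff to agent $(i,s)$ is $Q_{i,s}(\mathbf{a})=\mathbb{E}\big[\sum_{t=0}^\infty\gamma^tM_i(a(1,s^t),\dots,a(N,s^t);s^t)\mid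 s^0=s\big]$, which depends on the uncertain matrices $A^{ij}(\cdot)$. An ex-post equilibrium of the agent game is a profile $\mathbf{a}^*$ such that for every agent $(i,s)$ and every choice of $A^{ij}(s')\in\mathcal{U}^{ij}(s')$ for all $i,j,s'$, $a^*(i,s)$ maximizes $Q_{i,s}(a(i,s),\mathbf{a}^*_{-(i,s)})$ over $a(i,s)$. *)

theory Defs
  imports "HOL-Probability.Probability"
begin

(* Conventions:
   players are 0..N-1; stages form a finite type 's; actions are elements of a type 'a,
   player i's action set at stage s is X i s :: 'a set.
   A mixed action of player i at stage s is a pmf p with set_pmf p \<subseteq> X i s
   (= a probability vector over X i s).
   A i j s :: 'a \<Rightarrow> 'a \<Rightarrow> real is the payoff matrix A^{ij}(s), indexed by actions.
   P s a :: 's pmf is the transition law given the stage s and a pure action profile a;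
   for mixed profiles it is extended multilinearly (product distribution). *)

type_synonym ('s, 'a) hist = "('s \<times> (nat \<Rightarrow> 'a)) list"

definition mixed_on :: "'a set \<Rightarrow> 'a pmf \<Rightarrow> bool" where
  "mixed_on Y p \<longleftrightarrow> set_pmf p \<subseteq> Y"

definition stage_payoff ::
  "nat \<Rightarrow> (nat \<Rightarrow> 's \<Rightarrow> 'a set) \<Rightarrow> (nat \<Rightarrow> nat \<Rightarrow> 's \<Rightarrow> 'a \<Rightarrow> 'a \<Rightarrow> real)
   \<Rightarrow> nat \<Rightarrow> (nat \<Rightarrow> 'a pmf) \<Rightarrow> 's \<Rightarrow> real" where
  "stage_payoff N X A i x s =
     (\<Sum>j\<in>{..<N} - {i}. \<Sum>a\<in>X i s. \<Sum>b\<in>X j s. pmf (x i) a * A i j s a b * pmf (x j) b)"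

definition profile_pmf :: "nat \<Rightarrow> (nat \<Rightarrow> 'h \<Rightarrow> 's \<Rightarrow> 'a pmf) \<Rightarrow> 'h \<Rightarrow> 's \<Rightarrow> (nat \<Rightarrow> 'a) pmf" where
  "profile_pmf N \<sigma> h s = Pi_pmf {..<N} undefined (\<lambda>j. \<sigma> j h s)"

text \<open>The history records past stages and realised pure action profiles.\<close>
fun disc_val ::
  "nat \<Rightarrow> (nat \<Rightarrow> 's \<Rightarrow> 'a set) \<Rightarrow> ('s \<Rightarrow> (nat \<Rightarrow> 'a) \<Rightarrow> 's pmf) \<Rightarrow> real
   \<Rightarrow> (nat \<Rightarrow> nat \<Rightarrow> 's \<Rightarrow> 'a \<Rightarrow> 'a \<Rightarrow> real)
   \<Rightarrow> (nat \<Rightarrow> ('s, 'a) hist \<Rightarrow> 's \<Rightarrow> 'a pmf) \<Rightarrow> nat \<Rightarrow> nat \<Rightarrow> ('s, 'a) hist \<Rightarrow> 's \<Rightarrow> real" where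
  "disc_val N X P \<gamma> A \<sigma> i 0 h s = 0"
| "disc_val N X P \<gamma> A \<sigma> i (Suc T) h s =
     stage_payoff N X A i (\<lambda>j. \<sigma> j h s) s
     + \<gamma> * measure_pmf.expectation (profile_pmf N \<sigma> h s)
             (\<lambda>a. measure_pmf.expectation (P s a)
                    (\<lambda>s'. disc_val N X P \<gamma> A \<sigma> i T (h @ [(s, a)]) s'))"

definition disc_payoff ::
  "nat \<Rightarrow> (nat \<Rightarrow> 's \<Rightarrow> 'a set) \<Rightarrow> ('s \<Rightarrow> (nat \<Rightarrow> 'a) \<Rightarrow> 's pmf) \<Rightarrow> real
   \<Rightarrow> (nat \<Rightarrow> nat \<Rightarrow> 's \<Rightarrow> 'a \<Rightarrow> 'a \<Rightarrow> real)
   \<Rightarrow> (nat \<Rightarrow> ('s, 'a) hist \<Rightarrow> 's \<Rightarrow> 'a pmf) \<Rightarrow> nat \<Rightarrow> 's \<Rightarrow> real" where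
  "disc_payoff N X P \<gamma> A \<sigma> i s0 = lim (\<lambda>T. disc_val N X P \<gamma> A \<sigma> i T [] s0)"

definition is_strategy :: "(nat \<Rightarrow> 's \<Rightarrow> 'a set) \<Rightarrow> nat \<Rightarrow> (('s, 'a) hist \<Rightarrow> 's \<Rightarrow> 'a pmf) \<Rightarrow> bool" where
  "is_strategy X i \<sigma>i \<longleftrightarrow> (\<forall>h s. mixed_on (X i s) (\<sigma>i h s))"

definition markov :: "(nat \<Rightarrow> 's \<Rightarrow> 'a pmf) \<Rightarrow> (nat \<Rightarrow> ('s, 'a) hist \<Rightarrow> 's \<Rightarrow> 'a pmf)" where
  "markov x = (\<lambda>i h s. x i s)"

definition admissible ::
  "nat \<Rightarrow> (nat \<Rightarrow> nat \<Rightarrow> 's \<Rightarrow> ('a \<Rightarrow> 'a \<Rightarrow> real) set) \<Rightarrow> (nat \<Rightarrow> nat \<Rightarrow> 's \<Rightarrow> 'a \<Rightarrow> 'a \<Rightarrow> real) \<Rightarrow> bool" where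
  "admissible N U A \<longleftrightarrow> (\<forall>i<N. \<forall>j<N. \<forall>s. A i j s \<in> U i j s)"

definition expost_MPE ::
  "nat \<Rightarrow> (nat \<Rightarrow> 's \<Rightarrow> 'a set) \<Rightarrow> ('s \<Rightarrow> (nat \<Rightarrow> 'a) \<Rightarrow> 's pmf) \<Rightarrow> real
   \<Rightarrow> (nat \<Rightarrow> nat \<Rightarrow> 's \<Rightarrow> ('a \<Rightarrow> 'a \<Rightarrow> real) set) \<Rightarrow> (nat \<Rightarrow> 's \<Rightarrow> 'a pmf) \<Rightarrow> bool" where
  "expost_MPE N X P \<gamma> U x \<longleftrightarrow>
     (\<forall>i<N. \<forall>s. mixed_on (X i s) (x i s)) \<and>
     (\<forall>A. admissible N U A \<longrightarrow>
        (\<forall>i<N. \<forall>s. \<forall>\<sigma>i. is_strategy X i \<sigma>i \<longrightarrow>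
           disc_payoff N X P \<gamma> A ((markov x)(i := \<sigma>i)) i s \<le> disc_payoff N X P \<gamma> A (markov x) i s))"

text \<open>Agent game: agent (i,s) chooses a(i,s); its payoff Q_{i,s}(a) is the discounted payoff
  of player i from initial stage s when every player j plays a(j,s') at every stage s'.\<close>
definition agent_payoff ::
  "nat \<Rightarrow> (nat \<Rightarrow> 's \<Rightarrow> 'a set) \<Rightarrow> ('s \<Rightarrow> (nat \<Rightarrow> 'a) \<Rightarrow> 's pmf) \<Rightarrow> real
   \<Rightarrow> (nat \<Rightarrow> nat \<Rightarrow> 's \<Rightarrow> 'a \<Rightarrow> 'a \<Rightarrow> real) \<Rightarrow> (nat \<Rightarrow> 's \<Rightarrow> 'a pmf) \<Rightarrow> nat \<Rightarrow> 's \<Rightarrow> real" where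
  "agent_payoff N X P \<gamma> A a i s = disc_payoff N X P \<gamma> A (markov a) i s"

definition agent_expost_eq ::
  "nat \<Rightarrow> (nat \<Rightarrow> 's \<Rightarrow> 'a set) \<Rightarrow> ('s \<Rightarrow> (nat \<Rightarrow> 'a) \<Rightarrow> 's pmf) \<Rightarrow> real
   \<Rightarrow> (nat \<Rightarrow> nat \<Rightarrow> 's \<Rightarrow> ('a \<Rightarrow> 'a \<Rightarrow> real) set) \<Rightarrow> (nat \<Rightarrow> 's \<Rightarrow> 'a pmf) \<Rightarrow> bool" where
  "agent_expost_eq N X P \<gamma> U a \<longleftrightarrow>
     (\<forall>i<N. \<forall>s. mixed_on (X i s) (a i s)) \<and>
     (\<forall>A. admissible N U A \<longrightarrow>
        (\<forall>i<N. \<forall>s. \<forall>\<alpha>. mixed_on (X i s) \<alpha> \<longrightarrow>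
           agent_payoff N X P \<gamma> A (a(i := (a i)(s := \<alpha>))) i s \<le> agent_payoff N X P \<gamma> A a i s))"

end

theory Submission
  imports Defs
begin

lemma pmf_int_bound:
  fixes f :: "'b \<Rightarrow> real"
  assumes "\<And>x. \<bar>f x\<bar> \<le> c"
  shows "integrable (measure_pmf p) f"
  by (rule measure_pmf.integrable_const_bound[where B=c]) (auto simp: assms)

lemma pmf_exp_abs_le:
  fixes f :: "'b \<Rightarrow> real"
  assumes "\<And>x. \<bar>f x\<bar> \<le> c"
  shows "\<bar>measure_pmf.expectation p f\<bar> \<le> c"
proof -
  have "\<bar>measure_pmf.expectation p f\<bar> \<le> measure_pmf.expectation p (\<lambda>x. \<bar>f x\<bar>)"
    by (rule integral_abs_bound)
  also have "\<dots> \<le> measure_pmf.expectation p (\<lambda>x. c)"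
    using assms by (intro integral_mono pmf_int_bound[where c=c]) (auto intro: order_trans[OF abs_ge_zero])
  also have "\<dots> = c" by simp
  finally show ?thesis .
qed

lemma pmf_exp_mono:
  fixes f g :: "'b \<Rightarrow> real"
  assumes "\<And>x. \<bar>f x\<bar> \<le> c" "\<And>x. \<bar>g x\<bar> \<le> d" "\<And>x. x \<in> set_pmf p \<Longrightarrow> f x \<le> g x"
  shows "measure_pmf.expectation p f \<le> measure_pmf.expectation p g"
  by (intro integral_mono_AE pmf_int_bound[where c=c] pmf_int_bound[where c=d])
     (auto simp: assms AE_measure_pmf_iff)

lemma pmf_exp_diff:
  fixes f g :: "'b \<Rightarrow> real"
  assumes "\<And>x. \<bar>f x\<bar> \<le> c" "\<And>x. \<bar>g x\<bar> \<le> d"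
  shows "measure_pmf.expectation p f - measure_pmf.expectation p g = measure_pmf.expectation p (\<lambda>x. f x - g x)"
  by (subst Bochner_Integration.integral_diff) (auto intro: pmf_int_bound[where c=c] pmf_int_bound[where c=d] assms)

lemma pmf_exp_ge_const:
  fixes f :: "'b \<Rightarrow> real"
  assumes "\<And>x. \<bar>f x\<bar> \<le> c" "\<And>x. m \<le> f x"
  shows "m \<le> measure_pmf.expectation p f"
proof -
  have "measure_pmf.expectation p (\<lambda>x. m) \<le> measure_pmf.expectation p f"
    by (rule pmf_exp_mono[where c="\<bar>m\<bar>" and d=c]) (auto simp: assms)
  then show ?thesis by simp
qed

lemma stage_bound:
  "\<bar>stage_payoff N X A i x s\<bar> \<le> (\<Sum>j\<in>{..<N}-{i}. \<Sum>a\<in>X i s. \<Sum>b\<in>X j s. \<bar>A i j s a b\<bar>)"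
  unfolding stage_payoff_def
proof (intro order.trans[OF sum_abs] sum_mono order.trans[OF sum_abs] order.trans[OF sum_abs])
  fix j a b
  have "\<bar>pmf (x i) a * A i j s a b * pmf (x j) b\<bar> = pmf (x i) a * \<bar>A i j s a b\<bar> * pmf (x j) b"
    by (simp add: abs_mult)
  also have "\<dots> \<le> 1 * \<bar>A i j s a b\<bar> * 1"
    by (intro mult_mono) (auto simp: pmf_le_1)
  finally show "\<bar>pmf (x i) a * A i j s a b * pmf (x j) b\<bar> \<le> \<bar>A i j s a b\<bar>" by simp
qed

lemma pmf_exp_add_const:
  fixes f :: "'b \<Rightarrow> real"
  assumes "\<And>x. \<bar>f x\<bar> \<le> c"
  shows "measure_pmf.expectation p (\<lambda>x. f x + d) = measure_pmf.expectation p f + d"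
  by (subst Bochner_Integration.integral_add) (auto intro: pmf_int_bound[where c=c] assms)

lemma abs_le_pow_zero:
  fixes x c \<gamma> :: real
  assumes "0 \<le> \<gamma>" "\<gamma> < 1" "\<And>T. \<bar>x\<bar> \<le> c * \<gamma> ^ T"
  shows "x = 0"
proof -
  have "(\<lambda>T. c * \<gamma> ^ T) \<longlonglongrightarrow> c * 0"
    by (intro tendsto_mult tendsto_const LIMSEQ_power_zero) (use assms in auto)
  then have "\<bar>x\<bar> \<le> c * 0"
    by (rule LIMSEQ_le_const) (use assms in auto)
  then show ?thesis by simp
qed

context
  fixes N :: nat and X :: "nat \<Rightarrow> 's::finite \<Rightarrow> 'a set"
    and P :: "'s \<Rightarrow> (nat \<Rightarrow> 'a) \<Rightarrow> 's pmf" and \<gamma> :: real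
    and A :: "nat \<Rightarrow> nat \<Rightarrow> 's \<Rightarrow> 'a \<Rightarrow> 'a \<Rightarrow> real" and i :: nat
  assumes g0: "0 < \<gamma>" and g1: "\<gamma> < 1"
begin

abbreviation dv where "dv \<sigma> \<equiv> disc_val N X P \<gamma> A \<sigma> i"

definition Bm :: real where
  "Bm = (\<Sum>s\<in>UNIV. \<Sum>j\<in>{..<N}-{i}. \<Sum>a\<in>X i s. \<Sum>b\<in>X j s. \<bar>A i j s a b\<bar>)"

definition K :: real where "K = Bm / (1 - \<gamma>)"

lemma stage_Bm: "\<bar>stage_payoff N X A i x s\<bar> \<le> Bm"
proof -
  have "\<bar>stage_payoff N X A i x s\<bar> \<le> (\<Sum>j\<in>{..<N}-{i}. \<Sum>a\<in>X i s. \<Sum>b\<in>X j s. \<bar>A i j s a b\<bar>)"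
    by (rule stage_bound)
  also have "\<dots> \<le> Bm" unfolding Bm_def
    by (rule member_le_sum) (auto intro!: sum_nonneg)
  finally show ?thesis .
qed

lemma Bm_nonneg: "0 \<le> Bm"
  using stage_Bm[of undefined undefined] by linarith

lemma K_nonneg: "0 \<le> K"
  unfolding K_def using Bm_nonneg g1 by simp

lemma K_eq: "Bm + \<gamma> * K = K"
  unfolding K_def using g1 by (simp add: field_simps)

lemma dv_bound: "\<bar>dv \<sigma> T h s\<bar> \<le> K"
proof (induction T arbitrary: h s)
  case 0
  then show ?case using K_nonneg by simp
next
  case (Suc T)
  have e: "\<bar>measure_pmf.expectation (profile_pmf N \<sigma> h s)
             (\<lambda>a. measure_pmf.expectation (P s a) (\<lambda>s'. dv \<sigma> T (h @ [(s, a)]) s'))\<bar> \<le> K"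
    by (intro pmf_exp_abs_le Suc.IH)
  have "\<bar>dv \<sigma> (Suc T) h s\<bar> \<le> Bm + \<gamma> * K"
  proof -
    have "\<bar>\<gamma> * measure_pmf.expectation (profile_pmf N \<sigma> h s)
             (\<lambda>a. measure_pmf.expectation (P s a) (\<lambda>s'. dv \<sigma> T (h @ [(s, a)]) s'))\<bar> \<le> \<gamma> * K"
      using e g0 by (simp add: abs_mult)
    then show ?thesis unfolding disc_val.simps using stage_Bm[of "\<lambda>j. \<sigma> j h s" s] abs_triangle_ineq
      by (smt (verit))
  qed
  then show ?case using K_eq by simp
qed


lemma dv_tail: "\<bar>dv \<sigma> (T + m) h s - dv \<sigma> T h s\<bar> \<le> \<gamma> ^ T * K"
proof (induction T arbitrary: h s)
  case 0
  then show ?case using dv_bound by simp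
next
  case (Suc T)
  let ?p = "profile_pmf N \<sigma> h s"
  have "dv \<sigma> (Suc T + m) h s - dv \<sigma> (Suc T) h s =
     \<gamma> * (measure_pmf.expectation ?p
             (\<lambda>a. measure_pmf.expectation (P s a) (\<lambda>s'. dv \<sigma> (T + m) (h @ [(s, a)]) s'))
        - measure_pmf.expectation ?p
             (\<lambda>a. measure_pmf.expectation (P s a) (\<lambda>s'. dv \<sigma> T (h @ [(s, a)]) s')))"
    by (simp add: algebra_simps)
  also have "\<dots> = \<gamma> * measure_pmf.expectation ?p
             (\<lambda>a. measure_pmf.expectation (P s a) (\<lambda>s'. dv \<sigma> (T + m) (h @ [(s, a)]) s')
                 - measure_pmf.expectation (P s a) (\<lambda>s'. dv \<sigma> T (h @ [(s, a)]) s'))"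
    by (subst pmf_exp_diff[where c=K and d=K]) (auto intro!: pmf_exp_abs_le dv_bound)
  also have "\<dots> = \<gamma> * measure_pmf.expectation ?p
             (\<lambda>a. measure_pmf.expectation (P s a) (\<lambda>s'. dv \<sigma> (T + m) (h @ [(s, a)]) s'
                 - dv \<sigma> T (h @ [(s, a)]) s'))"
    by (subst pmf_exp_diff[where c=K and d=K]) (auto intro!: dv_bound)
  finally have eq: "dv \<sigma> (Suc T + m) h s - dv \<sigma> (Suc T) h s = \<dots>" .
  have "\<bar>measure_pmf.expectation ?p
             (\<lambda>a. measure_pmf.expectation (P s a) (\<lambda>s'. dv \<sigma> (T + m) (h @ [(s, a)]) s'
                 - dv \<sigma> T (h @ [(s, a)]) s'))\<bar> \<le> \<gamma> ^ T * K"
    by (intro pmf_exp_abs_le Suc.IH)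
  then show ?case unfolding eq using g0 by (simp add: abs_mult mult_left_mono)
qed

lemma dv_tail': "T \<le> n \<Longrightarrow> \<bar>dv \<sigma> n h s - dv \<sigma> T h s\<bar> \<le> \<gamma> ^ T * K"
  using dv_tail[of \<sigma> T "n - T" h s] by simp

lemma dv_conv: "convergent (\<lambda>T. dv \<sigma> T h s)"
proof -
  have "Cauchy (\<lambda>T. dv \<sigma> T h s)"
  proof (rule CauchyI)
    fix e :: real assume e: "0 < e"
    have "(\<lambda>T. \<gamma> ^ T * K) \<longlonglongrightarrow> 0 * K"
      by (intro tendsto_mult tendsto_const LIMSEQ_power_zero) (use g0 g1 in auto)
    then have lim0: "(\<lambda>T. \<gamma> ^ T * K) \<longlonglongrightarrow> 0" by simp
    have "\<forall>\<^sub>F T in sequentially. \<gamma> ^ T * K < e / 2"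
      using order_tendstoD(2)[OF lim0, of "e/2"] e by simp
    then obtain M where M: "\<And>T. T \<ge> M \<Longrightarrow> \<gamma> ^ T * K < e / 2"
      by (auto simp: eventually_sequentially)
    show "\<exists>M. \<forall>m\<ge>M. \<forall>n\<ge>M. norm (dv \<sigma> m h s - dv \<sigma> n h s) < e"
    proof (intro exI allI impI)
      fix m n assume "M \<le> m" "M \<le> n"
      then have "\<bar>dv \<sigma> m h s - dv \<sigma> M h s\<bar> \<le> \<gamma> ^ M * K" "\<bar>dv \<sigma> n h s - dv \<sigma> M h s\<bar> \<le> \<gamma> ^ M * K"
        by (auto intro: dv_tail')
      then show "norm (dv \<sigma> m h s - dv \<sigma> n h s) < e" using M[of M] by simp
    qed
  qed
  then show ?thesis by (simp add: Cauchy_convergent_iff)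
qed

lemma dv_lim_close: "\<bar>lim (\<lambda>T. dv \<sigma> T h s) - dv \<sigma> T h s\<bar> \<le> \<gamma> ^ T * K"
proof -
  have L: "(\<lambda>T. dv \<sigma> T h s) \<longlonglongrightarrow> lim (\<lambda>T. dv \<sigma> T h s)"
    using dv_conv by (simp add: convergent_LIMSEQ_iff)
  have "lim (\<lambda>T. dv \<sigma> T h s) \<le> dv \<sigma> T h s + \<gamma> ^ T * K"
    by (rule LIMSEQ_le_const2[OF L], rule exI[of _ T]) (auto dest: dv_tail'[of T _ \<sigma> h s] simp: abs_le_iff)
  moreover have "dv \<sigma> T h s - \<gamma> ^ T * K \<le> lim (\<lambda>T. dv \<sigma> T h s)"
    by (rule LIMSEQ_le_const[OF L], rule exI[of _ T]) (auto dest: dv_tail'[of T _ \<sigma> h s] simp: abs_le_iff)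
  ultimately show ?thesis by (simp add: abs_le_iff)
qed

abbreviation V where "V y s \<equiv> disc_payoff N X P \<gamma> A (markov y) i s"

lemma V_close: "\<bar>V y s - dv (markov y) T [] s\<bar> \<le> \<gamma> ^ T * K"
  unfolding disc_payoff_def by (rule dv_lim_close)

lemma V_bound: "\<bar>V y s\<bar> \<le> K"
  using V_close[of y s 0] by simp

lemma profile_markov: "profile_pmf N (markov y) h s = Pi_pmf {..<N} undefined (\<lambda>j. y j s)"
  by (simp add: profile_pmf_def markov_def)

lemma dv_markov_hist: "dv (markov y) T h s = dv (markov y) T h' s"
proof (induction T arbitrary: h h' s)
  case 0
  then show ?case by simp
next
  case (Suc T)
  have e: "\<And>a. dv (markov y) T (h @ [(s, a)]) = dv (markov y) T (h' @ [(s, a)])"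
    by (rule ext) (rule Suc.IH)
  show ?case
    by (simp only: disc_val.simps profile_markov e) (simp add: markov_def)
qed

lemma dv_markov_Suc: "dv (markov y) (Suc T) h s =
   stage_payoff N X A i (\<lambda>j. y j s) s + \<gamma> * measure_pmf.expectation (Pi_pmf {..<N} undefined (\<lambda>j. y j s))
     (\<lambda>a. measure_pmf.expectation (P s a) (\<lambda>s'. dv (markov y) T [] s'))"
proof -
  have e: "\<And>a. dv (markov y) T (h @ [(s, a)]) = dv (markov y) T []"
    by (rule ext) (rule dv_markov_hist)
  show ?thesis
    by (simp only: disc_val.simps profile_markov e) (simp add: markov_def)
qed

lemma V_fix: "V y s = stage_payoff N X A i (\<lambda>j. y j s) s + \<gamma> * measure_pmf.expectation (Pi_pmf {..<N} undefined (\<lambda>j. y j s))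
     (\<lambda>a. measure_pmf.expectation (P s a) (V y))"
proof -
  let ?p = "Pi_pmf {..<N} undefined (\<lambda>j. y j s)"
  let ?R = "stage_payoff N X A i (\<lambda>j. y j s) s + \<gamma> * measure_pmf.expectation ?p
     (\<lambda>a. measure_pmf.expectation (P s a) (V y))"
  have "\<bar>?R - V y s\<bar> \<le> (2 * \<gamma> * K) * \<gamma> ^ T" for T
  proof -
    have "?R - dv (markov y) (Suc T) [] s = \<gamma> * (measure_pmf.expectation ?p
     (\<lambda>a. measure_pmf.expectation (P s a) (V y)) - measure_pmf.expectation ?p
     (\<lambda>a. measure_pmf.expectation (P s a) (\<lambda>s'. dv (markov y) T [] s')))"
      unfolding dv_markov_Suc by (simp add: algebra_simps)
    also have "\<dots> = \<gamma> * measure_pmf.expectation ?p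
     (\<lambda>a. measure_pmf.expectation (P s a) (V y) - measure_pmf.expectation (P s a) (\<lambda>s'. dv (markov y) T [] s'))"
      by (subst pmf_exp_diff[where c=K and d=K]) (auto intro!: pmf_exp_abs_le dv_bound V_bound)
    also have "\<dots> = \<gamma> * measure_pmf.expectation ?p
     (\<lambda>a. measure_pmf.expectation (P s a) (\<lambda>s'. V y s' - dv (markov y) T [] s'))"
      by (subst pmf_exp_diff[where c=K and d=K]) (auto intro!: dv_bound V_bound)
    finally have eq: "?R - dv (markov y) (Suc T) [] s = \<dots>" .
    have "\<bar>measure_pmf.expectation ?p
     (\<lambda>a. measure_pmf.expectation (P s a) (\<lambda>s'. V y s' - dv (markov y) T [] s'))\<bar> \<le> \<gamma> ^ T * K"
      by (intro pmf_exp_abs_le V_close)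
    then have a: "\<bar>?R - dv (markov y) (Suc T) [] s\<bar> \<le> \<gamma> * (\<gamma> ^ T * K)"
      unfolding eq using g0 by (simp add: abs_mult mult_left_mono)
    have b: "\<bar>V y s - dv (markov y) (Suc T) [] s\<bar> \<le> \<gamma> * (\<gamma> ^ T * K)"
      using V_close[of y s "Suc T"] by (simp add: mult.assoc)
    have "\<bar>?R - V y s\<bar> \<le> 2 * (\<gamma> * (\<gamma> ^ T * K))" using a b by linarith
    then show ?thesis by (simp add: algebra_simps)
  qed
  then have "?R - V y s = 0" by (intro abs_le_pow_zero[where \<gamma>=\<gamma>]) (use g0 g1 in auto)
  then show ?thesis by simp
qed


lemma bellman:
  assumes agent: "\<And>s \<alpha>. mixed_on (X i s) \<alpha> \<Longrightarrow> V (x(i := (x i)(s := \<alpha>))) s \<le> V x s"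
    and \<alpha>: "mixed_on (X i s0) \<alpha>"
  shows "stage_payoff N X A i ((\<lambda>j. x j s0)(i := \<alpha>)) s0
     + \<gamma> * measure_pmf.expectation (Pi_pmf {..<N} undefined ((\<lambda>j. x j s0)(i := \<alpha>)))
          (\<lambda>a. measure_pmf.expectation (P s0 a) (V x)) \<le> V x s0"
proof (rule ccontr)
  assume "\<not> ?thesis"
  then have gt: "V x s0 < stage_payoff N X A i ((\<lambda>j. x j s0)(i := \<alpha>)) s0
     + \<gamma> * measure_pmf.expectation (Pi_pmf {..<N} undefined ((\<lambda>j. x j s0)(i := \<alpha>)))
          (\<lambda>a. measure_pmf.expectation (P s0 a) (V x))" by simp
  define y where "y = x(i := (x i)(s0 := \<alpha>))"
  have ys0: "(\<lambda>j. y j s0) = (\<lambda>j. x j s0)(i := \<alpha>)" by (auto simp: y_def)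
  have ys: "s \<noteq> s0 \<Longrightarrow> (\<lambda>j. y j s) = (\<lambda>j. x j s)" for s by (auto simp: y_def)
  define w where "w s = V y s - V x s" for s
  have wb: "\<bar>w s\<bar> \<le> 2 * K" for s
    using V_bound[of y s] V_bound[of x s] unfolding w_def by linarith
  define E where "E s (f::'s \<Rightarrow> real) = measure_pmf.expectation (Pi_pmf {..<N} undefined (\<lambda>j. y j s))
          (\<lambda>a. measure_pmf.expectation (P s a) f)" for s f
  have diff: "E s (V y) - E s (V x) = E s w" for s
  proof -
    have "E s (V y) - E s (V x) = measure_pmf.expectation (Pi_pmf {..<N} undefined (\<lambda>j. y j s))
          (\<lambda>a. measure_pmf.expectation (P s a) (V y) - measure_pmf.expectation (P s a) (V x))"
      unfolding E_def by (subst pmf_exp_diff[where c=K and d=K]) (auto intro!: pmf_exp_abs_le V_bound)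
    also have "\<dots> = E s w"
      unfolding E_def w_def by (subst pmf_exp_diff[where c=K and d=K]) (auto intro!: V_bound)
    finally show ?thesis .
  qed
  have strict: "\<gamma> * E s0 w < w s0"
  proof -
    have "V y s0 = stage_payoff N X A i ((\<lambda>j. x j s0)(i := \<alpha>)) s0 + \<gamma> * E s0 (V y)"
      using V_fix[of y s0] unfolding E_def ys0 .
    moreover have "V x s0 < stage_payoff N X A i ((\<lambda>j. x j s0)(i := \<alpha>)) s0 + \<gamma> * E s0 (V x)"
      using gt unfolding E_def ys0 .
    ultimately have "\<gamma> * (E s0 (V y) - E s0 (V x)) < w s0"
      unfolding w_def by (simp add: algebra_simps)
    then show ?thesis by (simp add: diff)
  qed
  have step: "\<gamma> * E s w \<le> w s" for s
  proof (cases "s = s0")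
    case True then show ?thesis using strict by simp
  next
    case False
    have "V y s = stage_payoff N X A i (\<lambda>j. x j s) s + \<gamma> * E s (V y)"
      using V_fix[of y s] unfolding E_def ys[OF False] .
    moreover have "V x s = stage_payoff N X A i (\<lambda>j. x j s) s + \<gamma> * E s (V x)"
      using V_fix[of x s] unfolding E_def ys[OF False] .
    ultimately have "w s = \<gamma> * (E s (V y) - E s (V x))"
      unfolding w_def by (simp add: algebra_simps)
    then show ?thesis by (simp add: diff)
  qed
  define m where "m = Min (range w)"
  have mle: "m \<le> w s" for s unfolding m_def by (rule Min_le) auto
  obtain s1 where s1: "w s1 = m"
  proof -
    have "Min (range w) \<in> range w" by (rule Min_in) auto
    then obtain t where "Min (range w) = w t" by blast
    then show ?thesis using that[of t] unfolding m_def by simp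
  qed
  have Ege: "m \<le> E s w" for s
    unfolding E_def
    by (intro pmf_exp_ge_const[where c="2*K"] pmf_exp_abs_le wb mle)
  have "\<gamma> * m \<le> m"
    using step[of s1] mult_left_mono[OF Ege[of s1], of \<gamma>] g0 s1 by linarith
  then have "0 \<le> (1 - \<gamma>) * m" by (simp add: algebra_simps)
  then have m0: "0 \<le> m" using g1 by (simp add: zero_le_mult_iff)
  have "0 \<le> \<gamma> * E s0 w" using Ege[of s0] m0 g0 by simp
  with strict have "V x s0 < V y s0" unfolding w_def by linarith
  with agent[OF \<alpha>] show False unfolding y_def by linarith
qed

lemma deviation:
  assumes bell: "\<And>s \<alpha>. mixed_on (X i s) \<alpha> \<Longrightarrow> stage_payoff N X A i ((\<lambda>j. x j s)(i := \<alpha>)) s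
     + \<gamma> * measure_pmf.expectation (Pi_pmf {..<N} undefined ((\<lambda>j. x j s)(i := \<alpha>)))
          (\<lambda>a. measure_pmf.expectation (P s a) (V x)) \<le> V x s"
    and strat: "is_strategy X i \<sigma>i"
  shows "dv ((markov x)(i := \<sigma>i)) T h s \<le> V x s + \<gamma> ^ T * K"
proof (induction T arbitrary: h s)
  case 0
  then show ?case using V_bound[of x s] by simp
next
  case (Suc T)
  let ?\<sigma> = "(markov x)(i := \<sigma>i)"
  let ?q = "(\<lambda>j. x j s)(i := \<sigma>i h s)"
  have q: "(\<lambda>j. ?\<sigma> j h s) = ?q" by (auto simp: markov_def)
  have prof: "profile_pmf N ?\<sigma> h s = Pi_pmf {..<N} undefined ?q"
    unfolding profile_pmf_def q ..
  have cnn: "0 \<le> \<gamma> ^ T * K" using g0 K_nonneg by simp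
  have vb: "\<bar>V x s' + \<gamma> ^ T * K\<bar> \<le> K + \<gamma> ^ T * K" for s'
    using V_bound[of x s'] cnn by (auto simp: abs_le_iff)
  have evb: "\<bar>measure_pmf.expectation (P s a) (V x) + \<gamma> ^ T * K\<bar> \<le> K + \<gamma> ^ T * K" for a
    using pmf_exp_abs_le[of "V x" K "P s a", OF V_bound] cnn by (auto simp: abs_le_iff)
  have inner: "measure_pmf.expectation (P s a) (\<lambda>s'. dv ?\<sigma> T (h @ [(s, a)]) s')
      \<le> measure_pmf.expectation (P s a) (V x) + \<gamma> ^ T * K" for a
  proof -
    have "measure_pmf.expectation (P s a) (\<lambda>s'. dv ?\<sigma> T (h @ [(s, a)]) s')
      \<le> measure_pmf.expectation (P s a) (\<lambda>s'. V x s' + \<gamma> ^ T * K)"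
      by (rule pmf_exp_mono[where c=K and d="K + \<gamma> ^ T * K"])
         (auto intro: dv_bound Suc.IH vb)
    also have "\<dots> = measure_pmf.expectation (P s a) (V x) + \<gamma> ^ T * K"
      by (rule pmf_exp_add_const[where c=K]) (rule V_bound)
    finally show ?thesis .
  qed
  have "measure_pmf.expectation (Pi_pmf {..<N} undefined ?q)
          (\<lambda>a. measure_pmf.expectation (P s a) (\<lambda>s'. dv ?\<sigma> T (h @ [(s, a)]) s'))
     \<le> measure_pmf.expectation (Pi_pmf {..<N} undefined ?q)
          (\<lambda>a. measure_pmf.expectation (P s a) (V x) + \<gamma> ^ T * K)"
    by (rule pmf_exp_mono[where c=K and d="K + \<gamma> ^ T * K"])
       (auto intro!: pmf_exp_abs_le dv_bound inner evb)
  also have "\<dots> = measure_pmf.expectation (Pi_pmf {..<N} undefined ?q)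
          (\<lambda>a. measure_pmf.expectation (P s a) (V x)) + \<gamma> ^ T * K"
    by (rule pmf_exp_add_const[where c=K]) (intro pmf_exp_abs_le V_bound)
  finally have ee: "measure_pmf.expectation (Pi_pmf {..<N} undefined ?q)
          (\<lambda>a. measure_pmf.expectation (P s a) (\<lambda>s'. dv ?\<sigma> T (h @ [(s, a)]) s'))
     \<le> measure_pmf.expectation (Pi_pmf {..<N} undefined ?q)
          (\<lambda>a. measure_pmf.expectation (P s a) (V x)) + \<gamma> ^ T * K" .
  have b: "stage_payoff N X A i ?q s + \<gamma> * measure_pmf.expectation (Pi_pmf {..<N} undefined ?q)
          (\<lambda>a. measure_pmf.expectation (P s a) (V x)) \<le> V x s"
    by (rule bell) (use strat in \<open>simp add: is_strategy_def\<close>)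
  have "dv ?\<sigma> (Suc T) h s = stage_payoff N X A i ?q s + \<gamma> * measure_pmf.expectation (Pi_pmf {..<N} undefined ?q)
          (\<lambda>a. measure_pmf.expectation (P s a) (\<lambda>s'. dv ?\<sigma> T (h @ [(s, a)]) s'))"
    by (simp only: disc_val.simps prof q)
  also have "\<dots> \<le> stage_payoff N X A i ?q s + \<gamma> * (measure_pmf.expectation (Pi_pmf {..<N} undefined ?q)
          (\<lambda>a. measure_pmf.expectation (P s a) (V x)) + \<gamma> ^ T * K)"
    using ee g0 by (simp add: mult_left_mono)
  also have "\<dots> \<le> V x s + \<gamma> ^ Suc T * K"
    using b by (simp add: algebra_simps)
  finally show ?case .
qed

lemma deviation_lim:
  assumes bell: "\<And>s \<alpha>. mixed_on (X i s) \<alpha> \<Longrightarrow> stage_payoff N X A i ((\<lambda>j. x j s)(i := \<alpha>)) s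
     + \<gamma> * measure_pmf.expectation (Pi_pmf {..<N} undefined ((\<lambda>j. x j s)(i := \<alpha>)))
          (\<lambda>a. measure_pmf.expectation (P s a) (V x)) \<le> V x s"
    and strat: "is_strategy X i \<sigma>i"
  shows "disc_payoff N X P \<gamma> A ((markov x)(i := \<sigma>i)) i s \<le> V x s"
proof -
  let ?u = "\<lambda>T. dv ((markov x)(i := \<sigma>i)) T [] s"
  have L: "?u \<longlonglongrightarrow> lim ?u"
    using dv_conv by (simp add: convergent_LIMSEQ_iff)
  have R: "(\<lambda>T. V x s + \<gamma> ^ T * K) \<longlonglongrightarrow> V x s + 0 * K"
    by (intro tendsto_add tendsto_mult tendsto_const LIMSEQ_power_zero) (use g0 g1 in auto)
  have "lim ?u \<le> V x s + 0 * K"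
    by (rule LIMSEQ_le[OF L R]) (auto intro: deviation[OF bell strat])
  then show ?thesis unfolding disc_payoff_def by simp
qed

end

theorem theorem2:
  fixes N :: nat
    and X :: "nat \<Rightarrow> 's::finite \<Rightarrow> 'a set"
    and P :: "'s \<Rightarrow> (nat \<Rightarrow> 'a) \<Rightarrow> 's pmf"
    and \<gamma> :: real
    and U :: "nat \<Rightarrow> nat \<Rightarrow> 's \<Rightarrow> ('a \<Rightarrow> 'a \<Rightarrow> real) set"
    and astar :: "nat \<Rightarrow> 's \<Rightarrow> 'a pmf"
  assumes "\<And>i s. i < N \<Longrightarrow> finite (X i s)"
    and "\<And>i s. i < N \<Longrightarrow> X i s \<noteq> {}"
    and "0 < \<gamma>" and "\<gamma> < 1"
    and "agent_expost_eq N X P \<gamma> U astar"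
  shows "expost_MPE N X P \<gamma> U (\<lambda>i s. astar i s)"
proof -
  have g0: "0 < \<gamma>" and g1: "\<gamma> < 1" by fact+
  note h = assms(5)[unfolded agent_expost_eq_def]
  have mix: "\<forall>i<N. \<forall>s. mixed_on (X i s) (astar i s)"
    by (rule conjunct1[OF h])
  have ag: "agent_payoff N X P \<gamma> A (astar(i := (astar i)(s := \<alpha>))) i s \<le> agent_payoff N X P \<gamma> A astar i s"
    if "admissible N U A" "i < N" "mixed_on (X i s) \<alpha>" for A i s \<alpha>
    by (rule conjunct2[OF h, rule_format, OF that])
  have dev: "disc_payoff N X P \<gamma> A ((markov astar)(i := \<sigma>i)) i s \<le> disc_payoff N X P \<gamma> A (markov astar) i s"
    if A: "admissible N U A" and i: "i < N" and st: "is_strategy X i \<sigma>i" for A i s \<sigma>i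
  proof (rule deviation_lim[OF g0 g1 _ st])
    fix s' \<alpha> assume m: "mixed_on (X i s') \<alpha>"
    have ag': "\<And>s \<alpha>. mixed_on (X i s) \<alpha> \<Longrightarrow> disc_payoff N X P \<gamma> A (markov (astar(i := (astar i)(s := \<alpha>)))) i s
           \<le> disc_payoff N X P \<gamma> A (markov astar) i s"
      using ag[OF A i] unfolding agent_payoff_def .
    show "stage_payoff N X A i ((\<lambda>j. astar j s')(i := \<alpha>)) s' +
         \<gamma> * measure_pmf.expectation (Pi_pmf {..<N} undefined ((\<lambda>j. astar j s')(i := \<alpha>)))
              (\<lambda>a. measure_pmf.expectation (P s' a) (\<lambda>s. disc_payoff N X P \<gamma> A (markov astar) i s))
         \<le> disc_payoff N X P \<gamma> A (markov astar) i s'"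
      by (rule bellman[OF g0 g1, where x=astar, OF ag' m])
  qed
  show ?thesis unfolding expost_MPE_def
  proof (rule conjI)
    show "\<forall>i<N. \<forall>s. mixed_on (X i s) (astar i s)" by (rule mix)
  next
    show "\<forall>A. admissible N U A \<longrightarrow> (\<forall>i<N. \<forall>s. \<forall>\<sigma>i. is_strategy X i \<sigma>i \<longrightarrow>
           disc_payoff N X P \<gamma> A ((markov astar)(i := \<sigma>i)) i s \<le> disc_payoff N X P \<gamma> A (markov astar) i s)"
      using dev by blast
  qed
qed

end
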